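(* Let $(n_k)_{k\in\mathbb{N}}$ and $(m_k)_{k\in\mathbb{N}}$ be two sequences of positive integers with $m_k \geq n_k/2$ for every $k\in\mathbb{N}$. Let $Q\in\mathbb{R}[x]$ be a polynomial. Let $\{f_k:\mathbb{Z}_{n_k}\to\mathbb{C}\}_{k\in\mathbb{N}}$ be a concentrated family of functions such that $\|f_k\|_2^2\leq Q(\log(n_k))$ for all $k\in\mathbb{N}$. Then the family $\{\widetilde{f_k}:\mathbb{Z}_{m_k}\to\mathbb{C}\}_{k\in\mathbb{N}}$ is concentrated.
   Context: $\mathbb{Z}_n=\{0,1,\dots,n-1\}$ with addition mod $n$. For $f,g:\mathbb{Z}_n\to\mathbb{C}$, $\langle f,g\rangle=\frac1n\sum_{x\in\mathbb{Z}_n}f(x)\overline{g(x)}$ and $\|f\|_2^2=\langle f,f\rangle$. For $\alpha\in\mathbb{Z}_n$, $\chi_\alpha(x)=\chi_{\alpha,n}(x)=\exp(2\pi i\alpha x/n)$ and $\widehat f(\alpha)=\langle f,\chi_\alpha\rangle$, so $f=\sum_{\alpha}\widehat f(\alpha)\chi_\alpha$. For $\Gamma\subseteq\mathbb{Z}_n$, $f|_\Gamma:\mathbb{Z}_n\to\mathbb{C}$ denotes the projection $f|_\Gamma(x)=\sum_{\alpha\in\Gamma}\widehat f(\alpha)\chi_\alpha(x)$. For $f:\mathbb{Z}_n\to\mathbb{C}$ and $m\in\mathbb{N}$, $\widetilde f:\mathbb{Z}_m\to\mathbb{C}$ is defined by $\widetilde f(x)=f(x)$ for $0\le x<\min(n,m)$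 and $\widetilde f(x)=0$ otherwise. A family $\{f_k:\mathbb{Z}_{n_k}\to\mathbb{C}\}_{k\in\mathbb{N}}$ (with $n_k$ positive integers) is concentrated if there is a bivariate polynomial $P\in\mathbb{R}[x,y]$ such that for all $k\in\mathbb{N}$ and all $\epsilon>0$ there is a set $\Gamma_k\subseteq\mathbb{Z}_{n_k}$ with $|\Gamma_k|\le P(\log(n_k),1/\epsilon)$ and $\|f_k-f_k|_{\Gamma_k}\|_2^2<\epsilon$. *)

theory Defs
  imports Complex_Main "HOL-Computational_Algebra.Polynomial"
begin

text \<open>A function Z_n -> C is represented as f :: nat => complex; only the values
  at 0,...,n-1 are ever used.\<close>

definition zn_inner :: "nat \<Rightarrow> (nat \<Rightarrow> complex) \<Rightarrow> (nat \<Rightarrow> complex) \<Rightarrow> complex" where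
  "zn_inner n f g = (1 / of_nat n) * (\<Sum>x<n. f x * cnj (g x))"

definition zn_norm2sq :: "nat \<Rightarrow> (nat \<Rightarrow> complex) \<Rightarrow> real" where
  "zn_norm2sq n f = Re (zn_inner n f f)"

definition zn_char :: "nat \<Rightarrow> nat \<Rightarrow> nat \<Rightarrow> complex" where
  "zn_char n \<alpha> x = exp (2 * of_real pi * \<i> * of_nat \<alpha> * of_nat x / of_nat n)"

definition zn_fourier :: "nat \<Rightarrow> (nat \<Rightarrow> complex) \<Rightarrow> nat \<Rightarrow> complex" where
  "zn_fourier n f \<alpha> = zn_inner n f (zn_char n \<alpha>)"

definition zn_proj :: "nat \<Rightarrow> (nat \<Rightarrow> complex) \<Rightarrow> nat set \<Rightarrow> nat \<Rightarrow> complex" where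
  "zn_proj n f \<Gamma> = (\<lambda>x. \<Sum>\<alpha>\<in>\<Gamma>. zn_fourier n f \<alpha> * zn_char n \<alpha> x)"

definition zn_tilde :: "nat \<Rightarrow> nat \<Rightarrow> (nat \<Rightarrow> complex) \<Rightarrow> nat \<Rightarrow> complex" where
  "zn_tilde n m f = (\<lambda>x. if x < min n m then f x else 0)"

definition bipoly_eval :: "nat \<Rightarrow> (nat \<Rightarrow> nat \<Rightarrow> real) \<Rightarrow> real \<Rightarrow> real \<Rightarrow> real" where
  "bipoly_eval d c x y = (\<Sum>i\<le>d. \<Sum>j\<le>d. c i j * x ^ i * y ^ j)"

definition concentrated :: "(nat \<Rightarrow> nat) \<Rightarrow> (nat \<Rightarrow> nat \<Rightarrow> complex) \<Rightarrow> bool" where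
  "concentrated n f \<longleftrightarrow>
     (\<exists>d c. \<forall>k. \<forall>\<epsilon>>0. \<exists>\<Gamma>. \<Gamma> \<subseteq> {..<n k} \<and>
        real (card \<Gamma>) \<le> bipoly_eval d c (ln (real (n k))) (1 / \<epsilon>) \<and>
        zn_norm2sq (n k) (\<lambda>x. f k x - zn_proj (n k) (f k) \<Gamma> x) < \<epsilon>)"

end

theory Submission
  imports Defs "HOL-Analysis.Analysis"
begin


lemma sin_ge_x_cos: assumes "0 \<le> y" "y \<le> pi/2" shows "y * cos y \<le> sin y"
proof -
  have "(\<lambda>t. sin t - t * cos t) 0 \<le> (\<lambda>t. sin t - t * cos t) y"
  proof (rule DERIV_nonneg_imp_nondecreasing[OF assms(1)])
    fix x assume x: "0 \<le> x" "x \<le> y"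
    show "\<exists>d. ((\<lambda>t. sin t - t * cos t) has_real_derivative d) (at x) \<and> 0 \<le> d"
    proof (intro exI conjI)
      show "((\<lambda>t. sin t - t * cos t) has_real_derivative (x * sin x)) (at x)"
        by (auto intro!: derivative_eq_intros simp: algebra_simps)
      have "0 \<le> sin x" using x assms by (intro sin_ge_zero) auto
      then show "0 \<le> x * sin x" using x by simp
    qed
  qed
  then show ?thesis by simp
qed

lemma sin_ge_half: assumes "0 \<le> y" "y \<le> pi/2" shows "y / 2 \<le> sin y"
proof (cases "y \<le> pi/3")
  case True
  have "cos (pi/3) \<le> cos y" using True assms by (intro cos_monotone_0_pi_le) auto
  then have "1/2 \<le> cos y" by (simp add: cos_60)
  then have "y * (1/2) \<le> y * cos y" using assms by (intro mult_left_mono) auto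
  then show ?thesis using sin_ge_x_cos[OF assms] by simp
next
  case False
  have "sin (pi/3) \<le> sin y" using False assms by (intro sin_monotone_2pi_le) auto
  then have a: "sqrt 3 / 2 \<le> sin y" by (simp add: sin_60)
  have "1.6 \<le> sqrt 3" by (rule real_le_rsqrt) (simp add: power2_eq_square)
  moreover have "pi \<le> 3.2" using pi_approx by simp
  ultimately show ?thesis using a assms by linarith
qed

lemma cmod_exp_minus_one: "cmod (exp (\<i> * complex_of_real \<phi>) - 1) = 2 * \<bar>sin (\<phi>/2)\<bar>"
proof -
  have e0: "exp (\<i> * complex_of_real \<phi>) = cis \<phi>" by (rule cis_conv_exp[symmetric])
  have e: "cis \<phi> - 1 = Complex (cos \<phi> - 1) (sin \<phi>)" by (simp add: complex_eq_iff)
  have "(cmod (exp (\<i> * complex_of_real \<phi>) - 1))^2 = (cos \<phi> - 1)^2 + (sin \<phi>)^2"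
    unfolding e0 e cmod_power2 by (simp only: complex.sel)
  also have "(cos \<phi> - 1)^2 = (cos \<phi>)^2 - 2 * cos \<phi> + 1" by (simp add: power2_diff)
  also have "(cos \<phi>)^2 - 2 * cos \<phi> + 1 + (sin \<phi>)^2 = 2 - 2 * cos \<phi>"
    using sin_cos_squared_add[of \<phi>] by linarith
  also have "cos \<phi> = 1 - 2 * (sin (\<phi>/2))^2"
    using cos_double_sin[of "\<phi>/2"] by simp
  also have "2 - 2 * (1 - 2 * (sin (\<phi>/2))^2) = (2 * \<bar>sin (\<phi>/2)\<bar>)^2"
    by (simp add: power_mult_distrib)
  finally show ?thesis by (rule power2_eq_imp_eq) auto
qed

lemma sin_min_bound: assumes "0 \<le> t" "t \<le> 1"
  shows "3 * min t (1 - t) \<le> 2 * sin (pi * t)"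
proof (cases "t \<le> 1/2")
  case True
  have "3 * min t (1 - t) \<le> 3 * t" by (simp add: min_def)
  also have "\<dots> \<le> pi * t" using pi_gt3 assms by (intro mult_right_mono) auto
  also have "\<dots> \<le> 2 * sin (pi * t)"
  proof -
    have "pi * t / 2 \<le> sin (pi * t)" using True assms by (intro sin_ge_half) auto
    then show ?thesis by simp
  qed
  finally show ?thesis .
next
  case False
  have "3 * min t (1 - t) \<le> 3 * (1 - t)" by (simp add: min_def)
  also have "\<dots> \<le> pi * (1 - t)" using pi_gt3 assms by (intro mult_right_mono) auto
  also have "\<dots> \<le> 2 * sin (pi * (1 - t))"
  proof -
    have "pi * (1 - t) / 2 \<le> sin (pi * (1 - t))" using False assms by (intro sin_ge_half) auto
    then show ?thesis by simp
  qed
  also have "pi * (1 - t) = pi - pi * t" by (simp add: right_diff_distrib)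
  also have "sin (pi - pi * t) = sin (pi * t)" by (rule sin_pi_minus)
  finally show ?thesis .
qed

lemma cmod_exp_2pi_ge: assumes "\<bar>s\<bar> \<le> 1"
  shows "3 * min \<bar>s\<bar> (1 - \<bar>s\<bar>) \<le> cmod (exp (2 * complex_of_real pi * \<i> * complex_of_real s) - 1)"
proof -
  have e1: "exp (2 * complex_of_real pi * \<i> * complex_of_real s) = exp (\<i> * complex_of_real (2 * pi * s))"
    by (simp add: algebra_simps)
  have e2: "cmod (exp (\<i> * complex_of_real (2 * pi * s)) - 1) = 2 * \<bar>sin (pi * s)\<bar>"
    using cmod_exp_minus_one[of "2 * pi * s"] by simp
  have eq: "cmod (exp (2 * complex_of_real pi * \<i> * complex_of_real s) - 1) = 2 * \<bar>sin (pi * s)\<bar>"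
    unfolding e1 e2 ..
  have sp: "0 \<le> sin (pi * \<bar>s\<bar>)" using assms by (intro sin_ge_zero) auto
  have ss: "\<bar>sin (pi * s)\<bar> = sin (pi * \<bar>s\<bar>)"
    using sp by (cases "s \<ge> 0") (auto simp: abs_if)
  show ?thesis unfolding eq ss using sin_min_bound[of "\<bar>s\<bar>"] assms by simp
qed



lemma exp_int_sum_zero:
  fixes M :: nat and d :: int
  assumes M: "M > 0" and nd: "\<not> int M dvd d"
  shows "(\<Sum>x<M. exp (2 * complex_of_real pi * \<i> * of_int d * of_nat x / of_nat M)) = 0"
proof -
  define w where "w = exp (2 * complex_of_real pi * \<i> * of_int d / of_nat M)"
  have pw: "exp (2 * complex_of_real pi * \<i> * of_int d * of_nat x / of_nat M) = w ^ x" for x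
  proof -
    have "exp (2 * complex_of_real pi * \<i> * of_int d * of_nat x / of_nat M)
        = exp (of_nat x * (2 * complex_of_real pi * \<i> * of_int d / of_nat M))"
      by (simp add: ac_simps)
    also have "\<dots> = w ^ x" unfolding w_def by (rule exp_of_nat_mult)
    finally show ?thesis .
  qed
  have wM: "w ^ M = 1"
  proof -
    have "w ^ M = exp (of_nat M * (2 * complex_of_real pi * \<i> * of_int d / of_nat M))"
      unfolding w_def by (rule exp_of_nat_mult[symmetric])
    also have "of_nat M * (2 * complex_of_real pi * \<i> * of_int d / of_nat M) = 2 * complex_of_real pi * \<i> * of_int d"
      using M by simp
    also have "exp (2 * complex_of_real pi * \<i> * of_int d) = 1" by (simp add: exp_eq_1)
    finally show ?thesis .
  qed
  have w1: "w \<noteq> 1"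
  proof
    assume "w = 1"
    then obtain n :: int where n: "2 * pi * real_of_int d / real M = real_of_int (2 * n) * pi"
      unfolding w_def exp_eq_1 by auto
    then have "real_of_int d = real_of_int n * real M" using M
      by (simp add: field_simps)
    then have "d = n * int M" by (metis of_int_eq_iff of_int_mult of_int_of_nat_eq)
    then show False using nd by simp
  qed
  show ?thesis unfolding pw geometric_sum[OF w1] wM by simp
qed

lemma zn_char_comm: "zn_char M a x = zn_char M x a"
  unfolding zn_char_def by (simp add: mult_ac)

lemma zn_char_prod:
  "zn_char M a x * cnj (zn_char M b x) =
     exp (2 * complex_of_real pi * \<i> * of_int (int a - int b) * of_nat x / of_nat M)"
proof -
  let ?u = "2 * complex_of_real pi * \<i> * of_nat a * of_nat x / of_nat M"
  let ?v = "2 * complex_of_real pi * \<i> * of_nat b * of_nat x / of_nat M"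
  have c: "cnj ?v = - ?v" by simp
  have "zn_char M a x * cnj (zn_char M b x) = exp ?u * exp (- ?v)"
    unfolding zn_char_def exp_cnj c ..
  also have "\<dots> = exp (?u - ?v)" by (simp add: exp_diff exp_minus field_simps)
  also have "?u - ?v = (2 * complex_of_real pi * \<i> * of_nat a * of_nat x - 2 * complex_of_real pi * \<i> * of_nat b * of_nat x) / of_nat M"
    by (rule diff_divide_distrib[symmetric])
  also have "2 * complex_of_real pi * \<i> * of_nat a * of_nat x - 2 * complex_of_real pi * \<i> * of_nat b * of_nat x
     = 2 * complex_of_real pi * \<i> * of_int (int a - int b) * of_nat x"
    by (simp add: algebra_simps)
  finally show ?thesis .
qed

lemma zn_orth:
  assumes M: "M > 0" and a: "a < M" and b: "b < M"
  shows "(\<Sum>x<M. zn_char M a x * cnj (zn_char M b x)) = (if a = b then of_nat M else 0)"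
proof (cases "a = b")
  case True
  have "zn_char M a x * cnj (zn_char M a x) = 1" for x
    unfolding zn_char_prod by simp
  then show ?thesis using True by simp
next
  case False
  have "\<not> int M dvd (int a - int b)"
  proof
    assume "int M dvd (int a - int b)"
    then obtain t where t: "int a - int b = int M * t" by (auto elim: dvdE)
    have "t = 0"
    proof (rule ccontr)
      assume "t \<noteq> 0"
      then have "int M * 1 \<le> int M * \<bar>t\<bar>" by (intro mult_left_mono) auto
      then have "\<bar>int M * t\<bar> \<ge> int M" by (simp add: abs_mult)
      then show False using t a b by linarith
    qed
    then show False using t False by simp
  qed
  then have "(\<Sum>x<M. exp (2 * complex_of_real pi * \<i> * of_int (int a - int b) * of_nat x / of_nat M)) = 0"
    by (rule exp_int_sum_zero[OF M])
  then show ?thesis unfolding zn_char_prod using False by simp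
qed

lemma zn_norm2sq_alt: "zn_norm2sq M g = (1 / real M) * (\<Sum>x<M. (cmod (g x))^2)"
proof -
  have "zn_inner M g g = (1 / of_nat M) * (\<Sum>x<M. complex_of_real ((cmod (g x))^2))"
    unfolding zn_inner_def by (simp only: complex_norm_square)
  also have "\<dots> = complex_of_real ((1 / real M) * (\<Sum>x<M. (cmod (g x))^2))"
    by simp
  finally show ?thesis unfolding zn_norm2sq_def by simp
qed

lemma zn_fourier_alt: "zn_fourier M g b = (1 / of_nat M) * (\<Sum>x<M. g x * cnj (zn_char M b x))"
  unfolding zn_fourier_def zn_inner_def by simp

lemma swap3: "(\<Sum>b\<in>B. \<Sum>x\<in>X. \<Sum>y\<in>Y. F b x y) = (\<Sum>x\<in>X. \<Sum>y\<in>Y. \<Sum>b\<in>B. F b x y)"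
proof -
  have "(\<Sum>b\<in>B. \<Sum>x\<in>X. \<Sum>y\<in>Y. F b x y) = (\<Sum>x\<in>X. \<Sum>b\<in>B. \<Sum>y\<in>Y. F b x y)"
    by (rule sum.swap)
  also have "\<dots> = (\<Sum>x\<in>X. \<Sum>y\<in>Y. \<Sum>b\<in>B. F b x y)"
    by (rule sum.cong[OF refl], rule sum.swap)
  finally show ?thesis .
qed

lemma parseval:
  assumes M: "M > 0"
  shows "zn_norm2sq M g = (\<Sum>b<M. (cmod (zn_fourier M g b))^2)"
proof -
  let ?c = "zn_char M"
  let ?k = "(1 / (of_nat M :: complex))^2"
  have "complex_of_real (\<Sum>b<M. (cmod (zn_fourier M g b))^2)
      = (\<Sum>b<M. complex_of_real ((cmod (zn_fourier M g b))^2))"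
    by (rule of_real_sum)
  also have "\<dots> = (\<Sum>b<M. zn_fourier M g b * cnj (zn_fourier M g b))"
    by (simp only: complex_norm_square)
  also have "\<dots> = (\<Sum>b<M. \<Sum>x<M. \<Sum>y<M. ?k * (g x * cnj (g y) * (?c y b * cnj (?c x b))))"
  proof (rule sum.cong[OF refl])
    fix b
    have "zn_fourier M g b * cnj (zn_fourier M g b)
       = ?k * ((\<Sum>x<M. g x * cnj (?c b x)) * (\<Sum>y<M. cnj (g y) * ?c b y))"
      unfolding zn_fourier_alt by (simp add: power2_eq_square)
    also have "\<dots> = ?k * (\<Sum>x<M. \<Sum>y<M. g x * cnj (g y) * (?c y b * cnj (?c x b)))"
      unfolding sum_product by (simp add: zn_char_comm mult_ac)
    also have "\<dots> = (\<Sum>x<M. \<Sum>y<M. ?k * (g x * cnj (g y) * (?c y b * cnj (?c x b))))"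
      by (simp only: sum_distrib_left)
    finally show "zn_fourier M g b * cnj (zn_fourier M g b) = \<dots>" .
  qed
  also have "\<dots> = (\<Sum>x<M. \<Sum>y<M. \<Sum>b<M. ?k * (g x * cnj (g y) * (?c y b * cnj (?c x b))))"
    by (rule swap3)
  also have "\<dots> = (\<Sum>x<M. \<Sum>y<M. ?k * (g x * cnj (g y)) * (\<Sum>b<M. ?c y b * cnj (?c x b)))"
    by (simp only: sum_distrib_left mult.assoc)
  also have "\<dots> = (\<Sum>x<M. \<Sum>y<M. ?k * (g x * cnj (g y)) * (if y = x then of_nat M else 0))"
    by (intro sum.cong refl) (simp add: zn_orth[OF M])
  also have "\<dots> = (\<Sum>x<M. ?k * (g x * cnj (g x)) * of_nat M)"
    by (intro sum.cong refl) (simp add: if_distrib[of "\<lambda>t. _ * t"] cong: if_cong)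
  also have "\<dots> = (\<Sum>x<M. complex_of_real ((1 / real M) * (cmod (g x))^2))"
  proof (intro sum.cong refl)
    fix x
    have gg: "g x * cnj (g x) = complex_of_real ((cmod (g x))^2)" by (rule complex_norm_square[symmetric])
    have "?k * complex_of_real ((cmod (g x))^2) * of_nat M = complex_of_real ((1 / real M) * (cmod (g x))^2)"
      using M by (simp add: power2_eq_square)
    then show "?k * (g x * cnj (g x)) * of_nat M = complex_of_real ((1 / real M) * (cmod (g x))^2)"
      unfolding gg .
  qed
  also have "\<dots> = complex_of_real ((1 / real M) * (\<Sum>x<M. (cmod (g x))^2))"
    by (simp add: sum_distrib_left)
  finally show ?thesis unfolding zn_norm2sq_alt by (metis of_real_eq_iff)
qed

lemma fourier_diff: "zn_fourier M (\<lambda>x. g x - h x) b = zn_fourier M g b - zn_fourier M h b"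
  unfolding zn_fourier_alt by (simp add: algebra_simps sum_subtractf)

lemma fourier_proj:
  assumes M: "M > 0" and L: "L \<subseteq> {..<M}" and b: "b < M"
  shows "zn_fourier M (zn_proj M g L) b = (if b \<in> L then zn_fourier M g b else 0)"
proof -
  have fin: "finite L" using L finite_subset by blast
  have "zn_fourier M (zn_proj M g L) b
      = (1 / of_nat M) * (\<Sum>x<M. \<Sum>a\<in>L. zn_fourier M g a * (zn_char M a x * cnj (zn_char M b x)))"
    unfolding zn_fourier_alt zn_proj_def by (simp only: sum_distrib_right mult.assoc)
  also have "\<dots> = (1 / of_nat M) * (\<Sum>a\<in>L. \<Sum>x<M. zn_fourier M g a * (zn_char M a x * cnj (zn_char M b x)))"
    by (subst sum.swap) (rule refl)
  also have "\<dots> = (\<Sum>a\<in>L. zn_fourier M g a * ((1 / of_nat M) * (\<Sum>x<M. zn_char M a x * cnj (zn_char M b x))))"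
    by (simp only: sum_distrib_left mult.left_commute)
  also have "\<dots> = (\<Sum>a\<in>L. if a = b then zn_fourier M g b else 0)"
    using L M b by (intro sum.cong refl) (auto simp: zn_orth subset_eq)
  also have "\<dots> = (if b \<in> L then zn_fourier M g b else 0)"
    using fin by (simp add: sum.delta')
  finally show ?thesis .
qed

lemma proj_error:
  assumes M: "M > 0" and L: "L \<subseteq> {..<M}"
  shows "zn_norm2sq M (\<lambda>x. g x - zn_proj M g L x) = (\<Sum>b\<in>{..<M} - L. (cmod (zn_fourier M g b))^2)"
proof -
  have "zn_norm2sq M (\<lambda>x. g x - zn_proj M g L x)
     = (\<Sum>b<M. (cmod (if b \<in> L then 0 else zn_fourier M g b))^2)"
    unfolding parseval[OF M] fourier_diff
    by (intro sum.cong refl) (simp add: fourier_proj[OF M L])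
  also have "\<dots> = (\<Sum>b\<in>{..<M} - L. (cmod (zn_fourier M g b))^2)"
    by (rule sum.mono_neutral_cong_right) auto
  finally show ?thesis .
qed



lemma geo_bound:
  fixes w :: complex
  assumes "w \<noteq> 1" "cmod w = 1"
  shows "cmod (\<Sum>x<L. w ^ x) \<le> 2 / cmod (w - 1)"
proof -
  have "cmod (\<Sum>x<L. w ^ x) = cmod (w ^ L - 1) / cmod (w - 1)"
    unfolding geometric_sum[OF assms(1)] by (simp add: norm_divide)
  also have "cmod (w ^ L - 1) \<le> 2"
  proof -
    have "cmod (w ^ L - 1) \<le> cmod (w ^ L) + cmod (1::complex)" by (rule norm_triangle_ineq4)
    also have "\<dots> = 2" using assms(2) by (simp add: norm_power)
    finally show ?thesis .
  qed
  then have "cmod (w ^ L - 1) / cmod (w - 1) \<le> 2 / cmod (w - 1)"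
    by (intro divide_right_mono) auto
  finally show ?thesis .
qed

lemma fourier_tilde_char:
  assumes "M > 0" "N > 0"
  shows "zn_fourier M (zn_tilde N M (zn_char N a)) b =
    (1 / of_nat M) * (\<Sum>x<min N M. exp (2 * complex_of_real pi * \<i> * complex_of_real (real a / real N - real b / real M)) ^ x)"
proof -
  let ?L = "min N M"
  let ?th = "real a / real N - real b / real M"
  have tm: "zn_char N a x * cnj (zn_char M b x) = exp (2 * complex_of_real pi * \<i> * complex_of_real ?th) ^ x" for x
  proof -
    let ?u = "2 * complex_of_real pi * \<i> * of_nat a * of_nat x / of_nat N"
    let ?v = "2 * complex_of_real pi * \<i> * of_nat b * of_nat x / of_nat M"
    have c: "cnj ?v = - ?v" by simp
    have "zn_char N a x * cnj (zn_char M b x) = exp ?u * exp (- ?v)"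
      unfolding zn_char_def exp_cnj c ..
    also have "\<dots> = exp (?u - ?v)" by (simp add: exp_diff exp_minus field_simps)
    also have "?u - ?v = of_nat x * (2 * complex_of_real pi * \<i> * complex_of_real ?th)"
      using assms by (simp add: field_simps)
    also have "exp \<dots> = exp (2 * complex_of_real pi * \<i> * complex_of_real ?th) ^ x"
      by (rule exp_of_nat_mult)
    finally show ?thesis .
  qed
  have "zn_fourier M (zn_tilde N M (zn_char N a)) b
      = (1 / of_nat M) * (\<Sum>x<M. if x \<in> {..<?L} then zn_char N a x * cnj (zn_char M b x) else 0)"
    unfolding zn_fourier_alt zn_tilde_def by (intro arg_cong2[where f="(*)"] refl sum.cong) auto
  also have "(\<Sum>x<M. if x \<in> {..<?L} then zn_char N a x * cnj (zn_char M b x) else 0)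
      = (\<Sum>x\<in>{..<M} \<inter> {..<?L}. zn_char N a x * cnj (zn_char M b x))"
    by (rule sum.inter_restrict[symmetric]) simp
  also have "{..<M} \<inter> {..<?L} = {..<?L}" by auto
  finally show ?thesis unfolding tm .
qed

lemma exp_2pi_int_shift:
  fixes k :: int
  shows "exp (2 * complex_of_real pi * \<i> * complex_of_real (s - real_of_int k)) =
         exp (2 * complex_of_real pi * \<i> * complex_of_real s)"
proof -
  have "exp (2 * complex_of_real pi * \<i> * complex_of_real (real_of_int k)) = 1"
    by (simp add: exp_eq_1)
  then show ?thesis by (simp add: right_diff_distrib exp_diff)
qed

lemma coeff_bound:
  fixes M :: nat and j k :: int and \<delta> :: real
  assumes M: "M > 0" and d: "\<bar>\<delta>\<bar> \<le> 1/2" and jM: "2 * \<bar>j\<bar> \<le> int M" and j2: "\<bar>j\<bar> \<ge> 2"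
  shows "(cmod ((1 / of_nat M) * (\<Sum>x<L. exp (2 * complex_of_real pi * \<i> *
            complex_of_real ((\<delta> - of_int j) / real M - of_int k)) ^ x)))^2
         \<le> 1 / (2 * real_of_int \<bar>j\<bar> * (real_of_int \<bar>j\<bar> - 1))"
proof -
  define s where "s = (\<delta> - of_int j) / real M"
  define r where "r = real_of_int \<bar>j\<bar>"
  define w where "w = exp (2 * complex_of_real pi * \<i> * complex_of_real s)"
  have r2: "r \<ge> 2" unfolding r_def using j2 by simp
  have rM: "2 * r \<le> real M" unfolding r_def using jM by linarith
  have Mpos: "real M > 0" using M by simp
  have ew: "exp (2 * complex_of_real pi * \<i> * complex_of_real ((\<delta> - of_int j) / real M - of_int k)) = w"
    unfolding w_def s_def by (rule exp_2pi_int_shift)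
  have abs_s: "\<bar>s\<bar> = \<bar>\<delta> - of_int j\<bar> / real M" unfolding s_def using Mpos by simp
  have dj1: "\<bar>\<delta> - of_int j\<bar> \<ge> r - 1/2" unfolding r_def using d by linarith
  have dj2: "\<bar>\<delta> - of_int j\<bar> \<le> r + 1/2" unfolding r_def using d by linarith
  have s1: "\<bar>s\<bar> \<le> 1"
  proof -
    have "\<bar>\<delta> - of_int j\<bar> \<le> real M" using dj2 rM r2 by linarith
    then show ?thesis unfolding abs_s using Mpos by simp
  qed
  have m1: "\<bar>s\<bar> \<ge> (r - 1/2) / real M" unfolding abs_s using dj1 Mpos by (simp add: divide_right_mono)
  have m2: "1 - \<bar>s\<bar> \<ge> (r - 1/2) / real M"
  proof -
    have "\<bar>s\<bar> \<le> (r + 1/2) / real M" unfolding abs_s using dj2 Mpos by (simp add: divide_right_mono)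
    moreover have "(r + 1/2) / real M + (r - 1/2) / real M = 2 * r / real M"
    proof -
      have "(r + 1/2) / real M + (r - 1/2) / real M = ((r + 1/2) + (r - 1/2)) / real M"
        by (rule add_divide_distrib[symmetric])
      also have "(r + 1/2) + (r - 1/2) = 2 * r" by simp
      finally show ?thesis .
    qed
    moreover have "2 * r / real M \<le> 1" using rM Mpos by simp
    ultimately show ?thesis by linarith
  qed
  define m where "m = (r - 1/2) / real M"
  have mpos: "m > 0" unfolding m_def using r2 Mpos by simp
  have wm: "3 * m \<le> cmod (w - 1)"
  proof -
    have "m \<le> min \<bar>s\<bar> (1 - \<bar>s\<bar>)" using m1 m2 unfolding m_def by simp
    then have "3 * m \<le> 3 * min \<bar>s\<bar> (1 - \<bar>s\<bar>)" by simp
    also have "\<dots> \<le> cmod (w - 1)" unfolding w_def by (rule cmod_exp_2pi_ge[OF s1])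
    finally show ?thesis .
  qed
  have w1: "w \<noteq> 1" using wm mpos by auto
  have wn: "cmod w = 1" unfolding w_def
    by (metis mult.commute mult.left_commute norm_exp_i_times of_real_mult of_real_numeral)
  have "cmod ((1 / of_nat M) * (\<Sum>x<L. w ^ x)) = (1 / real M) * cmod (\<Sum>x<L. w ^ x)"
    by (simp add: norm_mult norm_divide)
  also have "\<dots> \<le> (1 / real M) * (2 / cmod (w - 1))"
    using geo_bound[OF w1 wn] Mpos by (intro mult_left_mono) auto
  also have "\<dots> \<le> (1 / real M) * (2 / (3 * m))"
  proof -
    have "0 < cmod (w - 1)" using wm mpos by linarith
    then have "0 < 3 * m * cmod (w - 1)" using mpos by simp
    then have "2 / cmod (w - 1) \<le> 2 / (3 * m)" using wm mpos by (intro divide_left_mono) auto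
    then show ?thesis using Mpos by (intro mult_left_mono) auto
  qed
  also have "\<dots> = 2 / (3 * (r - 1/2))" unfolding m_def using Mpos by (simp add: field_simps)
  finally have b: "cmod ((1 / of_nat M) * (\<Sum>x<L. w ^ x)) \<le> 2 / (3 * (r - 1/2))" .
  have "(cmod ((1 / of_nat M) * (\<Sum>x<L. w ^ x)))^2 \<le> (2 / (3 * (r - 1/2)))^2"
    using b by (intro power_mono) auto
  also have "\<dots> \<le> 1 / (2 * r * (r - 1))"
  proof -
    have p1: "0 < 2 * r * (r - 1)" using r2 by simp
    have p2: "0 < (3 * (r - 1/2))^2" using r2 by simp
    have A: "(2 / (3 * (r - 1/2)))^2 = 4 / (3 * (r - 1/2))^2" by (simp add: power_divide)
    have ex: "(3 * (r - 1/2))^2 - 4 * (2 * r * (r - 1)) = (r - 1/2)^2 + 2"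
      by (simp add: power2_eq_square algebra_simps)
    have "0 \<le> (r - 1/2)^2" by simp
    then have ineq: "4 * (2 * r * (r - 1)) \<le> (3 * (r - 1/2))^2" using ex by linarith
    have B: "4 / (3 * (r - 1/2))^2 \<le> 4 / (4 * (2 * r * (r - 1)))"
    proof -
      have p3: "0 < (3 * (r - 1/2))^2 * (4 * (2 * r * (r - 1)))" by (rule mult_pos_pos) (use p1 p2 in auto)
      show ?thesis by (rule divide_left_mono[OF ineq _ p3]) simp
    qed
    have C: "4 / (4 * (2 * r * (r - 1))) = 1 / (2 * r * (r - 1))" by simp
    show ?thesis unfolding A using B C by simp
  qed
  finally show ?thesis unfolding ew r_def .
qed

lemma telescope:
  assumes "W \<ge> (1::nat)"
  shows "(\<Sum>r\<in>{W+1..W+p}. 1 / (real r * (real r - 1))) = 1 / real W - 1 / real (W + p)"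
proof (induction p)
  case 0
  then show ?case by simp
next
  case (Suc p)
  have "{W+1..W + Suc p} = insert (W + Suc p) {W+1..W+p}" by auto
  then have "(\<Sum>r\<in>{W+1..W+Suc p}. 1 / (real r * (real r - 1)))
      = 1 / (real (W + Suc p) * (real (W + Suc p) - 1)) + (1 / real W - 1 / real (W + p))"
    using Suc by simp
  also have "\<dots> = 1 / real W - 1 / real (W + Suc p)"
  proof -
    define q where "q = real (W + p)"
    have q: "q > 0" unfolding q_def using assms by simp
    have e1: "real (W + Suc p) = q + 1" unfolding q_def by simp
    have e2: "1 / ((q + 1) * (q + 1 - 1)) = 1 / q - 1 / (q + 1)" using q by (simp add: field_simps)
    show ?thesis unfolding e1 e2 q_def[symmetric] by simp
  qed
  finally show ?case .
qed

lemma telescope_le: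
  assumes "W \<ge> (1::nat)"
  shows "(\<Sum>r\<in>{W+1..M}. 1 / (real r * (real r - 1))) \<le> 1 / real W"
proof (cases "M \<le> W")
  case True
  then have "{W+1..M} = {}" by auto
  then show ?thesis by simp
next
  case False
  then obtain p where "M = W + p" by (metis le_add_diff_inverse nat_le_linear)
  then show ?thesis using telescope[OF assms, of p] by simp
qed



lemma tail_bound:
  fixes M N a W :: nat
  assumes M: "M > 0" and N: "N > 0" and W: "W \<ge> 1"
  shows "\<exists>\<Lambda>. \<Lambda> \<subseteq> {..<M} \<and> card \<Lambda> \<le> 2 * W + 1 \<and>
    (\<Sum>b\<in>{..<M} - \<Lambda>. (cmod (zn_fourier M (zn_tilde N M (zn_char N a)) b))^2) \<le> 1 / real W"
proof -
  define \<rho> where "\<rho> = real M * real a / real N"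
  define b0 where "b0 = round \<rho>"
  define \<delta> where "\<delta> = \<rho> - of_int b0"
  have d: "\<bar>\<delta>\<bar> \<le> 1/2" unfolding \<delta>_def b0_def using of_int_round_abs_le[of \<rho>] by linarith
  define h where "h = int M div 2"
  have h1: "2 * h \<le> int M" "int M \<le> 2 * h + 1" unfolding h_def by presburger+
  define J where "J b = ((int b - b0 + h) mod int M) - h" for b :: nat
  define K where "K b = (int b - b0 + h) div int M" for b :: nat
  have JK: "int b - b0 = J b + K b * int M" for b
    unfolding J_def K_def using div_mult_mod_eq[of "int b - b0 + h" "int M"] by linarith
  have Jlo: "- h \<le> J b" for b unfolding J_def using M by simp
  have Jhi: "J b \<le> int M - 1 - h" for b
  proof -
    have "(int b - b0 + h) mod int M < int M" using M by simp
    then show ?thesis unfolding J_def by linarith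
  qed
  have J2: "2 * \<bar>J b\<bar> \<le> int M" for b using Jlo[of b] Jhi[of b] h1 by linarith
  have Jmod: "(b0 + J b) mod int M = int b" if "b < M" for b
  proof -
    have e: "b0 + J b = int b + (- K b) * int M" using JK[of b] by (simp add: algebra_simps)
    have "(b0 + J b) mod int M = (int b + (- K b) * int M) mod int M" unfolding e ..
    also have "\<dots> = int b mod int M" by (rule mod_mult_self1)
    also have "\<dots> = int b" using that by simp
    finally show ?thesis .
  qed
  define \<Lambda> where "\<Lambda> = (\<lambda>i. nat ((b0 + i) mod int M)) ` {- int W..int W}"
  have sub: "\<Lambda> \<subseteq> {..<M}"
  proof
    fix x assume "x \<in> \<Lambda>"
    then obtain i where x: "x = nat ((b0 + i) mod int M)" unfolding \<Lambda>_def by auto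
    have p: "(b0 + i) mod int M < int M" using M by simp
    have q: "0 \<le> (b0 + i) mod int M" using M by simp
    have "nat ((b0 + i) mod int M) < M" using nat_less_iff[OF q, of M] p by simp
    then show "x \<in> {..<M}" unfolding x by simp
  qed
  have card: "card \<Lambda> \<le> 2 * W + 1"
  proof -
    have "card \<Lambda> \<le> card {- int W..int W}" unfolding \<Lambda>_def by (rule card_image_le) simp
    also have "\<dots> = 2 * W + 1" by simp
    finally show ?thesis .
  qed
  define B where "B = {..<M} - \<Lambda>"
  have JB: "\<bar>J b\<bar> \<ge> int W + 1" if "b \<in> B" for b
  proof (rule ccontr)
    assume "\<not> ?thesis"
    then have i: "J b \<in> {- int W..int W}" unfolding atLeastAtMost_iff by (intro conjI; linarith)
    have bM: "b < M" using that unfolding B_def by simp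
    have e: "b = nat ((b0 + J b) mod int M)" using Jmod[OF bM] by simp
    have "b \<in> \<Lambda>" unfolding \<Lambda>_def by (rule image_eqI[where f="\<lambda>i. nat ((b0 + i) mod int M)", OF e i])
    then show False using that unfolding B_def by simp
  qed
  have injJ: "inj_on J B"
  proof (rule inj_onI)
    fix x y assume x: "x \<in> B" and y: "y \<in> B" and xy: "J x = J y"
    have xM: "x < M" using x unfolding B_def by simp
    have yM: "y < M" using y unfolding B_def by simp
    have "int x = (b0 + J x) mod int M" using Jmod[OF xM] by simp
    also have "\<dots> = (b0 + J y) mod int M" using xy by simp
    also have "\<dots> = int y" using Jmod[OF yM] by simp
    finally show "x = y" by simp
  qed
  define Hh where "Hh j = 1 / (2 * real_of_int \<bar>j\<bar> * (real_of_int \<bar>j\<bar> - 1))" for j :: int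
  let ?F = "\<lambda>b. zn_fourier M (zn_tilde N M (zn_char N a)) b"
  have pt: "(cmod (?F b))^2 \<le> Hh (J b)" if "b \<in> B" for b
  proof -
    have th: "real a / real N - real b / real M = (\<delta> - of_int (J b)) / real M - of_int (K b)"
    proof -
      have c: "real b - real_of_int b0 = real_of_int (J b) + real_of_int (K b) * real M"
        using arg_cong[OF JK[of b], where f=real_of_int] by simp
      have Mpos: "real M > 0" using M by simp
      have e1: "\<delta> - of_int (J b) = (\<rho> - real b) + real_of_int (K b) * real M"
        using c unfolding \<delta>_def by linarith
      have "(\<delta> - of_int (J b)) / real M - of_int (K b) = ((\<rho> - real b) + real_of_int (K b) * real M) / real M - of_int (K b)"
        by (simp only: e1)
      also have "\<dots> = (\<rho> - real b) / real M"
        using Mpos by (simp add: add_divide_distrib)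
      also have "\<dots> = \<rho> / real M - real b / real M" by (rule diff_divide_distrib)
      also have "\<rho> / real M = real a / real N" unfolding \<rho>_def using Mpos by simp
      finally show ?thesis by simp
    qed
    have "(cmod (?F b))^2 = (cmod ((1 / of_nat M) * (\<Sum>x<min N M. exp (2 * complex_of_real pi * \<i> *
            complex_of_real ((\<delta> - of_int (J b)) / real M - of_int (K b))) ^ x)))^2"
      unfolding fourier_tilde_char[OF M N] th ..
    also have "\<dots> \<le> Hh (J b)" unfolding Hh_def
      by (rule coeff_bound[OF M d J2]) (use JB[OF that] W in linarith)
    finally show ?thesis .
  qed
  define S where "S = (\<lambda>r. int r) ` {W+1..M} \<union> (\<lambda>r. - int r) ` {W+1..M}"
  have JS: "J ` B \<subseteq> S"
  proof
    fix j assume "j \<in> J ` B"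
    then obtain b where b: "b \<in> B" "j = J b" by auto
    have lo: "\<bar>j\<bar> \<ge> int W + 1" using JB[OF b(1)] b(2) by simp
    have hi: "\<bar>j\<bar> \<le> int M" using J2[of b] b(2) by simp
    show "j \<in> S"
    proof (cases "j \<ge> 0")
      case True
      then have "j = int (nat j)" by simp
      moreover have "nat j \<in> {W+1..M}" using True lo hi by (simp add: le_nat_iff nat_le_iff)
      ultimately show ?thesis unfolding S_def by blast
    next
      case False
      then have "j = - int (nat (- j))" by simp
      moreover have "nat (- j) \<in> {W+1..M}" using False lo hi by (simp add: le_nat_iff nat_le_iff)
      ultimately show ?thesis unfolding S_def by blast
    qed
  qed
  have finS: "finite S" unfolding S_def by simp
  have Hnn: "Hh j \<ge> 0" if "j \<in> S" for j
  proof -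
    have "\<bar>j\<bar> \<ge> 2" using that W unfolding S_def by auto
    then have "real_of_int \<bar>j\<bar> \<ge> 2" by linarith
    then show ?thesis unfolding Hh_def by simp
  qed
  have "(\<Sum>b\<in>B. (cmod (?F b))^2) \<le> (\<Sum>b\<in>B. Hh (J b))"
    by (rule sum_mono) (rule pt)
  also have "\<dots> = (\<Sum>j\<in>J ` B. Hh j)" using sum.reindex[OF injJ, of Hh] by (simp add: comp_def)
  also have "\<dots> \<le> (\<Sum>j\<in>S. Hh j)"
    by (rule sum_mono2[OF finS JS]) (use Hnn in blast)
  also have "\<dots> = (\<Sum>r\<in>{W+1..M}. 1 / (real r * (real r - 1)))"
  proof -
    have disj: "(\<lambda>r. int r) ` {W+1..M} \<inter> (\<lambda>r. - int r) ` {W+1..M} = {}" by auto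
    have i1: "inj_on (\<lambda>r. int r) {W+1..M}" by (simp add: inj_on_def)
    have i2: "inj_on (\<lambda>r. - int r) {W+1..M}" by (simp add: inj_on_def)
    have "(\<Sum>j\<in>S. Hh j) = (\<Sum>j\<in>(\<lambda>r. int r) ` {W+1..M}. Hh j) + (\<Sum>j\<in>(\<lambda>r. - int r) ` {W+1..M}. Hh j)"
      unfolding S_def by (rule sum.union_disjoint) (use disj in auto)
    also have "\<dots> = (\<Sum>r\<in>{W+1..M}. Hh (int r)) + (\<Sum>r\<in>{W+1..M}. Hh (- int r))"
      using sum.reindex[OF i1, of Hh] sum.reindex[OF i2, of Hh] by (simp add: comp_def)
    also have "\<dots> = (\<Sum>r\<in>{W+1..M}. 1 / (real r * (real r - 1)))"
      unfolding sum.distrib[symmetric] by (rule sum.cong) (auto simp: Hh_def)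
    finally show ?thesis .
  qed
  also have "\<dots> \<le> 1 / real W" by (rule telescope_le[OF W])
  finally show ?thesis using sub card unfolding B_def by blast
qed



lemma fourier_lin:
  "zn_fourier M (\<lambda>x. u x + (\<Sum>a\<in>A. c a * v a x)) b = zn_fourier M u b + (\<Sum>a\<in>A. c a * zn_fourier M (v a) b)"
proof -
  have "(\<Sum>x<M. (u x + (\<Sum>a\<in>A. c a * v a x)) * cnj (zn_char M b x))
      = (\<Sum>x<M. u x * cnj (zn_char M b x)) + (\<Sum>x<M. \<Sum>a\<in>A. c a * (v a x * cnj (zn_char M b x)))"
    by (simp add: distrib_right sum.distrib sum_distrib_right mult.assoc)
  also have "(\<Sum>x<M. \<Sum>a\<in>A. c a * (v a x * cnj (zn_char M b x))) = (\<Sum>a\<in>A. \<Sum>x<M. c a * (v a x * cnj (zn_char M b x)))"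
    by (rule sum.swap)
  also have "\<dots> = (\<Sum>a\<in>A. c a * (\<Sum>x<M. v a x * cnj (zn_char M b x)))"
    by (simp only: sum_distrib_left)
  finally have e: "(\<Sum>x<M. (u x + (\<Sum>a\<in>A. c a * v a x)) * cnj (zn_char M b x))
      = (\<Sum>x<M. u x * cnj (zn_char M b x)) + (\<Sum>a\<in>A. c a * (\<Sum>x<M. v a x * cnj (zn_char M b x)))" .
  show ?thesis unfolding zn_fourier_alt e
    by (simp only: distrib_left sum_distrib_left mult.left_commute)
qed

lemma tilde_decomp:
  "zn_tilde N M F x = zn_tilde N M (\<lambda>x. F x - zn_proj N F G x) x
     + (\<Sum>a\<in>G. zn_fourier N F a * zn_tilde N M (zn_char N a) x)"
proof (cases "x < min N M")
  case True
  then show ?thesis unfolding zn_tilde_def zn_proj_def by simp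
next
  case False
  show ?thesis unfolding zn_tilde_def by (simp only: False if_False mult_zero_right sum.neutral_const add_0)
qed

lemma tilde_norm:
  assumes "N > 0" "M > 0"
  shows "zn_norm2sq M (zn_tilde N M u) \<le> (real N / real M) * zn_norm2sq N u"
proof -
  have "(\<Sum>x<M. (cmod (zn_tilde N M u x))^2) = (\<Sum>x\<in>{..<M} \<inter> {..<min N M}. (cmod (u x))^2)"
    unfolding sum.inter_restrict[OF finite_lessThan] zn_tilde_def by (intro sum.cong) auto
  also have "{..<M} \<inter> {..<min N M} = {..<min N M}" by auto
  also have "(\<Sum>x<min N M. (cmod (u x))^2) \<le> (\<Sum>x<N. (cmod (u x))^2)"
    by (rule sum_mono2) auto
  finally have s: "(\<Sum>x<M. (cmod (zn_tilde N M u x))^2) \<le> (\<Sum>x<N. (cmod (u x))^2)" .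
  have "zn_norm2sq M (zn_tilde N M u) = (1 / real M) * (\<Sum>x<M. (cmod (zn_tilde N M u x))^2)"
    by (rule zn_norm2sq_alt)
  also have "\<dots> \<le> (1 / real M) * (\<Sum>x<N. (cmod (u x))^2)"
    using s assms by (intro mult_left_mono) auto
  also have "\<dots> = (real N / real M) * ((1 / real N) * (\<Sum>x<N. (cmod (u x))^2))"
    using assms by simp
  also have "\<dots> = (real N / real M) * zn_norm2sq N u" unfolding zn_norm2sq_alt ..
  finally show ?thesis .
qed

lemma coeff_le_norm:
  assumes "N > 0" "a < N"
  shows "(cmod (zn_fourier N u a))^2 \<le> zn_norm2sq N u"
  unfolding parseval[OF assms(1)] using assms(2)
  by (intro member_le_sum) auto

lemma sq_sum_le:
  fixes c U :: "'a \<Rightarrow> complex"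
  assumes "finite A"
  shows "(cmod (\<Sum>a\<in>A. c a * U a))^2 \<le> real (card A) * (\<Sum>a\<in>A. (cmod (c a))^2 * (cmod (U a))^2)"
proof -
  have "cmod (\<Sum>a\<in>A. c a * U a) \<le> (\<Sum>a\<in>A. cmod (c a * U a))" by (rule norm_sum)
  then have "(cmod (\<Sum>a\<in>A. c a * U a))^2 \<le> (\<Sum>a\<in>A. cmod (c a * U a))^2"
    by (intro power_mono) auto
  also have "\<dots> \<le> (\<Sum>a\<in>A. (cmod (c a * U a))^2) * real (card A)"
    by (rule sum_squared_le_sum_of_squares)
  also have "\<dots> = real (card A) * (\<Sum>a\<in>A. (cmod (c a))^2 * (cmod (U a))^2)"
    by (simp add: norm_mult power_mult_distrib mult.commute)
  finally show ?thesis .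
qed

lemma sq_add_le: "(cmod (x + y))^2 \<le> 2 * (cmod x)^2 + 2 * (cmod y)^2"
proof -
  have "cmod (x + y) \<le> cmod x + cmod y" by (rule norm_triangle_ineq)
  then have "(cmod (x + y))^2 \<le> (cmod x + cmod y)^2" by (intro power_mono) auto
  also have "\<dots> \<le> 2 * (cmod x)^2 + 2 * (cmod y)^2"
  proof -
    have "0 \<le> (cmod x - cmod y)^2" by simp
    then show ?thesis by (simp add: power2_eq_square algebra_simps)
  qed
  finally show ?thesis .
qed

lemma bipoly_binom:
  "bipoly_eval D (\<lambda>i j. K * real (D choose i) * real (D choose j)) x y = K * (1 + x)^D * (1 + y)^D"
proof -
  have bx: "(1 + x)^D = (\<Sum>i\<le>D. real (D choose i) * x^i)"
    using binomial_ring[of x 1 D] by (simp add: add.commute)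
  have by': "(1 + y)^D = (\<Sum>j\<le>D. real (D choose j) * y^j)"
    using binomial_ring[of y 1 D] by (simp add: add.commute)
  have "K * (1 + x)^D * (1 + y)^D = K * ((\<Sum>i\<le>D. real (D choose i) * x^i) * (\<Sum>j\<le>D. real (D choose j) * y^j))"
    unfolding bx by' by (simp only: mult.assoc)
  also have "\<dots> = K * (\<Sum>i\<le>D. \<Sum>j\<le>D. (real (D choose i) * x^i) * (real (D choose j) * y^j))"
    by (simp only: sum_product)
  also have "\<dots> = (\<Sum>i\<le>D. \<Sum>j\<le>D. K * ((real (D choose i) * x^i) * (real (D choose j) * y^j)))"
    by (simp only: sum_distrib_left)
  also have "\<dots> = bipoly_eval D (\<lambda>i j. K * real (D choose i) * real (D choose j)) x y"
    unfolding bipoly_eval_def by (intro sum.cong refl) (simp add: mult_ac)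
  finally show ?thesis by simp
qed

lemma bipoly_bound:
  assumes x: "0 \<le> x" "x \<le> X" and y: "0 \<le> y" "y \<le> Y" and X1: "1 \<le> X" and Y1: "1 \<le> Y"
  shows "bipoly_eval d c x y \<le> (\<Sum>i\<le>d. \<Sum>j\<le>d. \<bar>c i j\<bar>) * X^d * Y^d"
proof -
  have "bipoly_eval d c x y \<le> (\<Sum>i\<le>d. \<Sum>j\<le>d. \<bar>c i j\<bar> * (X^d * Y^d))"
    unfolding bipoly_eval_def
  proof (intro sum_mono)
    fix i j assume i: "i \<in> {..d}" and j: "j \<in> {..d}"
    have p: "0 \<le> x ^ i * y ^ j" using x y by simp
    have "c i j * x ^ i * y ^ j = c i j * (x ^ i * y ^ j)" by (simp only: mult.assoc)
    also have "\<dots> \<le> \<bar>c i j\<bar> * (x ^ i * y ^ j)" by (rule mult_right_mono[OF abs_ge_self p])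
    also have "x ^ i * y ^ j \<le> X ^ d * Y ^ d"
    proof (rule mult_mono)
      have "x ^ i \<le> X ^ i" using x by (intro power_mono) auto
      also have "\<dots> \<le> X ^ d" using i X1 by (intro power_increasing) auto
      finally show "x ^ i \<le> X ^ d" .
      have "y ^ j \<le> Y ^ j" using y by (intro power_mono) auto
      also have "\<dots> \<le> Y ^ d" using j Y1 by (intro power_increasing) auto
      finally show "y ^ j \<le> Y ^ d" .
    qed (use X1 y in auto)
    then have "\<bar>c i j\<bar> * (x ^ i * y ^ j) \<le> \<bar>c i j\<bar> * (X ^ d * Y ^ d)" by (intro mult_left_mono) auto
    finally show "c i j * x ^ i * y ^ j \<le> \<bar>c i j\<bar> * (X ^ d * Y ^ d)" .
  qed
  also have "\<dots> = (\<Sum>i\<le>d. \<Sum>j\<le>d. \<bar>c i j\<bar>) * X^d * Y^d"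
    by (simp add: sum_distrib_right mult.assoc)
  finally show ?thesis .
qed

lemma poly_bound:
  fixes Q :: "real poly"
  assumes "0 \<le> x" "x \<le> X" "1 \<le> X"
  shows "poly Q x \<le> (\<Sum>i\<le>degree Q. \<bar>coeff Q i\<bar>) * X ^ degree Q"
proof -
  have "poly Q x \<le> (\<Sum>i\<le>degree Q. \<bar>coeff Q i\<bar> * X ^ degree Q)"
    unfolding poly_altdef
  proof (rule sum_mono)
    fix i assume i: "i \<in> {..degree Q}"
    have "coeff Q i * x ^ i \<le> \<bar>coeff Q i\<bar> * x ^ i"
      using assms by (intro mult_right_mono) auto
    also have "x ^ i \<le> X ^ degree Q"
    proof -
      have "x ^ i \<le> X ^ i" using assms by (intro power_mono) auto
      also have "\<dots> \<le> X ^ degree Q" using i assms by (intro power_increasing) auto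
      finally show ?thesis .
    qed
    then have "\<bar>coeff Q i\<bar> * x ^ i \<le> \<bar>coeff Q i\<bar> * X ^ degree Q" by (intro mult_left_mono) auto
    finally show "coeff Q i * x ^ i \<le> \<bar>coeff Q i\<bar> * X ^ degree Q" .
  qed
  also have "\<dots> = (\<Sum>i\<le>degree Q. \<bar>coeff Q i\<bar>) * X ^ degree Q" by (simp add: sum_distrib_right)
  finally show ?thesis .
qed



lemma norm2sq_nonneg: "zn_norm2sq M g \<ge> 0"
  unfolding zn_norm2sq_alt by (intro mult_nonneg_nonneg sum_nonneg) auto

theorem theorem1p5:
  fixes n m :: "nat \<Rightarrow> nat" and Q :: "real poly" and f :: "nat \<Rightarrow> nat \<Rightarrow> complex"
  assumes "\<And>k. n k > 0" and "\<And>k. m k > 0"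
    and "\<And>k. real (m k) \<ge> real (n k) / 2"
    and "concentrated n f"
    and "\<And>k. zn_norm2sq (n k) (f k) \<le> poly Q (ln (real (n k)))"
  shows "concentrated m (\<lambda>k. zn_tilde (n k) (m k) (f k))"
proof -
  from assms(4) obtain d c where H: "\<forall>k. \<forall>\<epsilon>>0. \<exists>\<Gamma>. \<Gamma> \<subseteq> {..<n k} \<and>
        real (card \<Gamma>) \<le> bipoly_eval d c (ln (real (n k))) (1 / \<epsilon>) \<and>
        zn_norm2sq (n k) (\<lambda>x. f k x - zn_proj (n k) (f k) \<Gamma> x) < \<epsilon>"
    unfolding concentrated_def by blast
  define Cb where "Cb = (\<Sum>i\<le>d. \<Sum>j\<le>d. \<bar>c i j\<bar>) * 8^d"
  define e where "e = degree Q"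
  define Cq where "Cq = (\<Sum>i\<le>e. \<bar>coeff Q i\<bar>)"
  define D where "D = 3 * d + e + 1"
  define K where "K = 8 * Cb^3 * Cq + 5 * Cb"
  define c' where "c' = (\<lambda>i j. K * real (D choose i) * real (D choose j))"
  have Cb0: "Cb \<ge> 0" unfolding Cb_def by (intro mult_nonneg_nonneg sum_nonneg) auto
  have Cq0: "Cq \<ge> 0" unfolding Cq_def by (intro sum_nonneg) auto
  have main: "\<exists>\<Lambda>. \<Lambda> \<subseteq> {..<m k} \<and> real (card \<Lambda>) \<le> bipoly_eval D c' (ln (real (m k))) (1 / \<epsilon>) \<and>
        zn_norm2sq (m k) (\<lambda>x. zn_tilde (n k) (m k) (f k) x - zn_proj (m k) (zn_tilde (n k) (m k) (f k)) \<Lambda> x) < \<epsilon>"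
    if \<epsilon>: "\<epsilon> > 0" for k \<epsilon>
  proof -
    define N where "N = n k"
    define M where "M = m k"
    have N0: "N > 0" unfolding N_def by (rule assms(1))
    have M0: "M > 0" unfolding M_def by (rule assms(2))
    have NM: "real N \<le> 2 * real M" unfolding N_def M_def using assms(3)[of k] by linarith
    define X where "X = 1 + ln (real M)"
    define Y where "Y = 1 + 1 / \<epsilon>"
    have lnM: "0 \<le> ln (real M)" using M0 by simp
    have X1: "1 \<le> X" unfolding X_def using lnM by simp
    have Y1: "1 \<le> Y" unfolding Y_def using \<epsilon> by simp
    have lnN0: "0 \<le> ln (real N)" using N0 by simp
    have lnNX: "ln (real N) \<le> X"
    proof -
      have "ln (real N) \<le> ln (2 * real M)" using N0 NM by simp
      also have "\<dots> = ln 2 + ln (real M)" using M0 by (simp add: ln_mult)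
      also have "\<dots> \<le> X" unfolding X_def using ln_2_less_1 by simp
      finally show ?thesis .
    qed
    obtain \<Gamma> where \<Gamma>: "\<Gamma> \<subseteq> {..<N}"
      and card\<Gamma>: "real (card \<Gamma>) \<le> bipoly_eval d c (ln (real N)) (1 / (\<epsilon> / 8))"
      and err: "zn_norm2sq N (\<lambda>x. f k x - zn_proj N (f k) \<Gamma> x) < \<epsilon> / 8"
      using H \<epsilon> unfolding N_def by (meson zero_less_divide_iff zero_less_numeral)
    define G where "G = real (card \<Gamma>)"
    have G0: "0 \<le> G" unfolding G_def by simp
    have Gb: "G \<le> Cb * X^d * Y^d"
    proof -
      have "bipoly_eval d c (ln (real N)) (1 / (\<epsilon> / 8)) \<le> (\<Sum>i\<le>d. \<Sum>j\<le>d. \<bar>c i j\<bar>) * X^d * (8 * Y)^d"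
      proof (rule bipoly_bound)
        show "1 / (\<epsilon> / 8) \<le> 8 * Y" unfolding Y_def using \<epsilon> by simp
      qed (use lnN0 lnNX X1 Y1 \<epsilon> in auto)
      also have "\<dots> = Cb * X^d * Y^d" unfolding Cb_def by (simp add: power_mult_distrib)
      finally show ?thesis using card\<Gamma> unfolding G_def by simp
    qed
    define Qp where "Qp = Cq * X^e"
    have Qp0: "0 \<le> Qp" unfolding Qp_def using Cq0 X1 by simp
    have fnorm: "zn_norm2sq N (f k) \<le> Qp"
    proof -
      have "zn_norm2sq N (f k) \<le> poly Q (ln (real N))" unfolding N_def by (rule assms(5))
      also have "\<dots> \<le> Qp" unfolding Qp_def Cq_def e_def by (rule poly_bound[OF lnN0 lnNX X1])
      finally show ?thesis .
    qed
    define W where "W = nat \<lceil>4 * G^2 * Qp / \<epsilon>\<rceil> + 1"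
    have W1: "W \<ge> 1" unfolding W_def by simp
    have Wlo: "4 * G^2 * Qp / \<epsilon> \<le> real W"
    proof -
      have "4 * G^2 * Qp / \<epsilon> \<le> real_of_int \<lceil>4 * G^2 * Qp / \<epsilon>\<rceil>" by (rule le_of_int_ceiling)
      also have "\<dots> \<le> real (nat \<lceil>4 * G^2 * Qp / \<epsilon>\<rceil>)" by simp
      finally show ?thesis unfolding W_def by simp
    qed
    have Whi: "real W \<le> 4 * G^2 * Qp / \<epsilon> + 2"
    proof -
      have nn: "0 \<le> 4 * G^2 * Qp / \<epsilon>" using Qp0 \<epsilon> by simp
      have "real_of_int \<lceil>4 * G^2 * Qp / \<epsilon>\<rceil> \<le> 4 * G^2 * Qp / \<epsilon> + 1" by (rule of_int_ceiling_le_add_one)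
      moreover have "real (nat \<lceil>4 * G^2 * Qp / \<epsilon>\<rceil>) = real_of_int \<lceil>4 * G^2 * Qp / \<epsilon>\<rceil>"
        using nn by (simp add: ceiling_le_zero)
      moreover have "real W = real (nat \<lceil>4 * G^2 * Qp / \<epsilon>\<rceil>) + 1" unfolding W_def by simp
      ultimately show ?thesis by linarith
    qed
    have "\<forall>a. \<exists>\<Lambda>. \<Lambda> \<subseteq> {..<M} \<and> card \<Lambda> \<le> 2 * W + 1 \<and>
      (\<Sum>b\<in>{..<M} - \<Lambda>. (cmod (zn_fourier M (zn_tilde N M (zn_char N a)) b))^2) \<le> 1 / real W"
      using tail_bound[OF M0 N0 W1] by blast
    then obtain Lam where Lam1: "\<And>a. Lam a \<subseteq> {..<M}" and Lam2: "\<And>a. card (Lam a) \<le> 2 * W + 1"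
      and Lam3: "\<And>a. (\<Sum>b\<in>{..<M} - Lam a. (cmod (zn_fourier M (zn_tilde N M (zn_char N a)) b))^2) \<le> 1 / real W"
      by metis
    define \<Lambda> where "\<Lambda> = (\<Union>a\<in>\<Gamma>. Lam a)"
    have fin\<Gamma>: "finite \<Gamma>" using \<Gamma> finite_subset by blast
    have \<Lambda>sub: "\<Lambda> \<subseteq> {..<M}" unfolding \<Lambda>_def using Lam1 by blast
    have card\<Lambda>: "real (card \<Lambda>) \<le> G * (2 * real W + 1)"
    proof -
      have "card \<Lambda> \<le> (\<Sum>a\<in>\<Gamma>. card (Lam a))" unfolding \<Lambda>_def by (rule card_UN_le[OF fin\<Gamma>])
      also have "\<dots> \<le> (\<Sum>a\<in>\<Gamma>. 2 * W + 1)" by (rule sum_mono) (rule Lam2)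
      also have "\<dots> = card \<Gamma> * (2 * W + 1)" by simp
      finally have "real (card \<Lambda>) \<le> real (card \<Gamma> * (2 * W + 1))" by (simp only: of_nat_le_iff)
      then show ?thesis unfolding G_def by (simp add: algebra_simps)
    qed
    have cardP: "real (card \<Lambda>) \<le> bipoly_eval D c' (ln (real (m k))) (1 / \<epsilon>)"
    proof -
      have eP: "bipoly_eval D c' (ln (real (m k))) (1 / \<epsilon>) = K * X^D * Y^D"
        unfolding c'_def bipoly_binom X_def Y_def M_def ..
      have iY: "1 / \<epsilon> \<le> Y" unfolding Y_def by simp
      have XD: "X ^ a \<le> X ^ D" if "a \<le> D" for a using X1 that by (intro power_increasing) auto
      have YD: "Y ^ a \<le> Y ^ D" if "a \<le> D" for a using Y1 that by (intro power_increasing) auto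
      have X0: "0 \<le> X" "0 \<le> Y" using X1 Y1 by auto
      have "G * (2 * real W + 1) \<le> G * (2 * (4 * G^2 * Qp / \<epsilon> + 2) + 1)"
        using Whi G0 by (intro mult_left_mono) auto
      also have "\<dots> = 8 * (G^3 * Qp * (1 / \<epsilon>)) + 5 * G"
        by (simp add: algebra_simps power2_eq_square power3_eq_cube)
      also have "\<dots> \<le> 8 * ((Cb * X^d * Y^d)^3 * Qp * Y) + 5 * (Cb * X^d * Y^d)"
      proof -
        have "G^3 \<le> (Cb * X^d * Y^d)^3" using Gb G0 by (intro power_mono) auto
        then have "G^3 * Qp \<le> (Cb * X^d * Y^d)^3 * Qp" using Qp0 by (intro mult_right_mono) auto
        then have "G^3 * Qp * (1 / \<epsilon>) \<le> (Cb * X^d * Y^d)^3 * Qp * Y"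
          using \<epsilon> Qp0 Cb0 X0 by (intro mult_mono[OF _ iY]) auto
        then show ?thesis using Gb by linarith
      qed
      also have "(Cb * X^d * Y^d)^3 * Qp * Y = (Cb^3 * Cq) * (X^(3*d+e) * Y^(3*d+1))"
        unfolding Qp_def by (simp add: power_mult_distrib power_add power_mult algebra_simps)
      also have "\<dots> \<le> (Cb^3 * Cq) * (X^D * Y^D)"
      proof -
        have a: "X^(3*d+e) \<le> X^D" by (rule XD) (simp add: D_def)
        have b: "Y^(3*d+1) \<le> Y^D" by (rule YD) (simp add: D_def)
        have "X^(3*d+e) * Y^(3*d+1) \<le> X^D * Y^D" by (rule mult_mono[OF a b]) (use X0 in auto)
        then show ?thesis using Cb0 Cq0 by (intro mult_left_mono) auto
      qed
      also have "Cb * X^d * Y^d \<le> Cb * (X^D * Y^D)"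
      proof -
        have a: "X^d \<le> X^D" by (rule XD) (simp add: D_def)
        have b: "Y^d \<le> Y^D" by (rule YD) (simp add: D_def)
        have "X^d * Y^d \<le> X^D * Y^D" by (rule mult_mono[OF a b]) (use X0 in auto)
        then show ?thesis using Cb0 by (simp only: mult.assoc, intro mult_left_mono) auto
      qed
      finally have "G * (2 * real W + 1) \<le> 8 * ((Cb^3 * Cq) * (X^D * Y^D)) + 5 * (Cb * (X^D * Y^D))"
        by linarith
      also have "\<dots> = K * X^D * Y^D" unfolding K_def by (simp add: algebra_simps)
      finally show ?thesis using card\<Lambda> eP by linarith
    qed
    define g where "g = zn_tilde N M (f k)"
    define u where "u = zn_tilde N M (\<lambda>x. f k x - zn_proj N (f k) \<Gamma> x)"
    define A where "A a = zn_fourier N (f k) a" for a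
    define U where "U a = zn_tilde N M (zn_char N a)" for a
    have gdec: "g = (\<lambda>x. u x + (\<Sum>a\<in>\<Gamma>. A a * U a x))"
      unfolding g_def u_def A_def U_def by (rule ext) (rule tilde_decomp)
    have Fg: "zn_fourier M g b = zn_fourier M u b + (\<Sum>a\<in>\<Gamma>. A a * zn_fourier M (U a) b)" for b
      unfolding gdec by (rule fourier_lin)
    have Ab: "(cmod (A a))^2 \<le> Qp" if "a \<in> \<Gamma>" for a
    proof -
      have "a < N" using that \<Gamma> by auto
      then have "(cmod (A a))^2 \<le> zn_norm2sq N (f k)" unfolding A_def by (rule coeff_le_norm[OF N0])
      then show ?thesis using fnorm by linarith
    qed
    have pt: "(cmod (zn_fourier M g b))^2 \<le> 2 * (cmod (zn_fourier M u b))^2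
        + 2 * (G * (Qp * (\<Sum>a\<in>\<Gamma>. (cmod (zn_fourier M (U a) b))^2)))" for b
    proof -
      have "(cmod (\<Sum>a\<in>\<Gamma>. A a * zn_fourier M (U a) b))^2
          \<le> G * (\<Sum>a\<in>\<Gamma>. (cmod (A a))^2 * (cmod (zn_fourier M (U a) b))^2)"
        unfolding G_def by (rule sq_sum_le[OF fin\<Gamma>])
      also have "(\<Sum>a\<in>\<Gamma>. (cmod (A a))^2 * (cmod (zn_fourier M (U a) b))^2)
          \<le> (\<Sum>a\<in>\<Gamma>. Qp * (cmod (zn_fourier M (U a) b))^2)"
        by (rule sum_mono) (use Ab in \<open>auto intro: mult_right_mono\<close>)
      also have "\<dots> = Qp * (\<Sum>a\<in>\<Gamma>. (cmod (zn_fourier M (U a) b))^2)" by (simp add: sum_distrib_left)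
      finally have s: "(cmod (\<Sum>a\<in>\<Gamma>. A a * zn_fourier M (U a) b))^2
          \<le> G * (Qp * (\<Sum>a\<in>\<Gamma>. (cmod (zn_fourier M (U a) b))^2))"
        using G0 by (simp add: mult_left_mono)
      show ?thesis unfolding Fg using sq_add_le[of "zn_fourier M u b" "\<Sum>a\<in>\<Gamma>. A a * zn_fourier M (U a) b"] s
        by linarith
    qed
    define B where "B = {..<M} - \<Lambda>"
    have "zn_norm2sq M (\<lambda>x. g x - zn_proj M g \<Lambda> x) = (\<Sum>b\<in>B. (cmod (zn_fourier M g b))^2)"
      unfolding B_def by (rule proj_error[OF M0 \<Lambda>sub])
    also have "\<dots> \<le> (\<Sum>b\<in>B. 2 * (cmod (zn_fourier M u b))^2
        + 2 * (G * (Qp * (\<Sum>a\<in>\<Gamma>. (cmod (zn_fourier M (U a) b))^2))))"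
      by (rule sum_mono) (rule pt)
    also have "\<dots> = 2 * (\<Sum>b\<in>B. (cmod (zn_fourier M u b))^2)
        + 2 * (G * (Qp * (\<Sum>a\<in>\<Gamma>. \<Sum>b\<in>B. (cmod (zn_fourier M (U a) b))^2)))"
      by (simp add: sum.distrib sum_distrib_left sum.swap[of _ B \<Gamma>])
    also have "(\<Sum>b\<in>B. (cmod (zn_fourier M u b))^2) \<le> zn_norm2sq M u"
      unfolding parseval[OF M0] B_def by (rule sum_mono2) auto
    also have "(\<Sum>a\<in>\<Gamma>. \<Sum>b\<in>B. (cmod (zn_fourier M (U a) b))^2) \<le> (\<Sum>a\<in>\<Gamma>. 1 / real W)"
    proof (rule sum_mono)
      fix a assume a: "a \<in> \<Gamma>"
      have "(\<Sum>b\<in>B. (cmod (zn_fourier M (U a) b))^2) \<le> (\<Sum>b\<in>{..<M} - Lam a. (cmod (zn_fourier M (U a) b))^2)"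
        unfolding B_def \<Lambda>_def by (rule sum_mono2) (use a in auto)
      also have "\<dots> \<le> 1 / real W" unfolding U_def by (rule Lam3)
      finally show "(\<Sum>b\<in>B. (cmod (zn_fourier M (U a) b))^2) \<le> 1 / real W" .
    qed
    also have "(\<Sum>a\<in>\<Gamma>. 1 / real W) = G / real W" unfolding G_def by simp
    finally have E: "zn_norm2sq M (\<lambda>x. g x - zn_proj M g \<Lambda> x) \<le> 2 * zn_norm2sq M u + 2 * (G * (Qp * (G / real W)))"
      using G0 Qp0 by (simp add: mult_left_mono)
    have un: "zn_norm2sq M u < \<epsilon> / 4"
    proof -
      have "zn_norm2sq M u \<le> (real N / real M) * zn_norm2sq N (\<lambda>x. f k x - zn_proj N (f k) \<Gamma> x)"
        unfolding u_def by (rule tilde_norm[OF N0 M0])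
      also have "\<dots> \<le> 2 * zn_norm2sq N (\<lambda>x. f k x - zn_proj N (f k) \<Gamma> x)"
        using NM M0 norm2sq_nonneg by (intro mult_right_mono) (auto simp: divide_simps)
      also have "\<dots> < \<epsilon> / 4" using err by simp
      finally show ?thesis .
    qed
    have wn: "2 * (G * (Qp * (G / real W))) \<le> \<epsilon> / 2"
    proof -
      have Wp: "real W > 0" using W1 by simp
      have "4 * G^2 * Qp \<le> \<epsilon> * real W" using Wlo \<epsilon> by (simp add: divide_simps mult.commute)
      then have q: "(4 * G^2 * Qp) / real W \<le> \<epsilon>" using Wp by (simp add: pos_divide_le_eq)
      have e: "2 * (G * (Qp * (G / real W))) = (1/2) * ((4 * G^2 * Qp) / real W)"
        by (simp add: power2_eq_square mult_ac)
      have gen: "\<And>t::real. t \<le> \<epsilon> \<Longrightarrow> (1/2) * t \<le> \<epsilon> / 2" by linarith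
      show ?thesis unfolding e by (rule gen[OF q])
    qed
    have "zn_norm2sq M (\<lambda>x. g x - zn_proj M g \<Lambda> x) < \<epsilon>" using E un wn by linarith
    then show ?thesis using \<Lambda>sub cardP unfolding g_def M_def N_def by blast
  qed
  show ?thesis unfolding concentrated_def
    by (intro exI[of _ D] exI[of _ c'] allI impI) (rule main)
qed


end
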